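(* Fix $N\in\mathbb{N}$, a constant $0<\alpha\le 1$, and for each $k\in\{0,\dots,N-1\}$ matrices $A_k\in\mathbb{R}^{n_x\times n_x}$, $B_k\in\mathbb{R}^{n_x\times n_u}$, $F_k\in\mathbb{R}^{n_x\times n_w}$, $E_k\in\mathbb{R}^{n_x\times n_p}$, $C_k\in\mathbb{R}^{n_q\times n_x}$, $D_k\in\mathbb{R}^{n_q\times n_u}$, $G_k\in\mathbb{R}^{n_q\times n_w}$ and a constant $\gamma_k>0$. Suppose there exist $Q_k\in\mathbb{S}^{n_x}_{++}$ for $k\in\{0,\dots,N\}$, and, for $k\in\{0,\dots,N-1\}$, matrices $Y_k\in\mathbb{R}^{n_u\times n_x}$ and scalars $\nu^p_k>0$, $\lambda^w_k>0$ such that for all $k\in\{0,\dots,N-1\}$ $$\begin{bmatrix} \alpha Q_k-\lambda^w_k Q_k & * & * & * & *\\ 0 & \nu^p_k I_{n_p} & * & * & *\\ 0 & 0 & \lambda^w_k I_{n_w} & * & *\\ A_kQ_k+B_kY_k & \nu^p_k E_k & F_k & Q_{k+1} & *\\ C_kQ_k+D_kY_k & 0 & G_k & 0 & \frac{\nu^p_k}{\gamma_k^2} I_{n_q} \end{bmatrix}\succeq 0 .$$ Let $K_k=Y_kQ_k^{-1}$, $A^{cl}_k=A_k+B_kK_k$, $C^{cl}_k=C_k+D_kK_k$. Then for every $k\in\{0,\dots,N-1\}$ and every $\eta\in\mathbb{R}^{n_x}$, $\delta p\in\mathbb{R}^{n_p}$, $w\in\mathbb{R}^{n_w}$ satisfying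 $$\|\delta p\|_2\le\gamma_k\|C^{cl}_k\eta+G_kw\|_2\quad\text{and}\quad \eta^\top Q_k^{-1}\eta\ \ge\ \|w\|_2^2,$$ the vector $\eta^+=A^{cl}_k\eta+F_kw+E_k\delta p$ satisfies $$(\eta^+)^\top Q_{k+1}^{-1}\eta^+\ \le\ \alpha\,\eta^\top Q_k^{-1}\eta .$$
   Context: Here $\mathbb{S}^n_{++}$ denotes the set of symmetric positive definite $n\times n$ matrices, and in a symmetric block matrix the symbol $*$ denotes the block determined by symmetry (i.e. the transpose of the corresponding lower-triangular block). $I_m$ is the $m\times m$ identity. The conclusion is the "Lyapunov condition" for the quadratic function $V(k,\eta)=\eta^\top Q_k^{-1}\eta$ along the discrete-time difference closed-loop system $\eta_{k+1}=A^{cl}_k\eta_k+F_kw_k+E_k\delta p_k$, $\delta q_k=C^{cl}_k\eta_k+G_kw_k$, in which the nonlinearity satisfies the Lipschitz-type bound $\|\delta p_k\|_2\le\gamma_k\|\delta q_k\|_2$. *)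

theory Defs
  imports "HOL-Analysis.Analysis"
begin

definition sym_pos_def :: "real^'n^'n \<Rightarrow> bool" where
  "sym_pos_def M \<longleftrightarrow> transpose M = M \<and> (\<forall>x. x \<noteq> 0 \<longrightarrow> 0 < x \<bullet> (M *v x))"

definition psd :: "real^'n^'n \<Rightarrow> bool" where
  "psd M \<longleftrightarrow> transpose M = M \<and> (\<forall>x. 0 \<le> x \<bullet> (M *v x))"

text \<open>Block index of the 5x5 block matrix whose row/column index type is
  'x + 'p + 'w + 'x + 'q (block sizes n_x, n_p, n_w, n_x, n_q).\<close>
definition blk :: "'x + ('p + ('w + ('x + 'q))) \<Rightarrow> nat" where
  "blk i = (case i of Inl _ \<Rightarrow> 1 | Inr (Inl _) \<Rightarrow> 2 | Inr (Inr (Inl _)) \<Rightarrow> 3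
          | Inr (Inr (Inr (Inl _))) \<Rightarrow> 4 | Inr (Inr (Inr (Inr _))) \<Rightarrow> 5)"

definition lower_entry ::
  "real^'x^'x \<Rightarrow> real^'p^'p \<Rightarrow> real^'w^'w \<Rightarrow>
   real^'x^'x \<Rightarrow> real^'p^'x \<Rightarrow> real^'w^'x \<Rightarrow> real^'x^'x \<Rightarrow>
   real^'x^'q \<Rightarrow> real^'p^'q \<Rightarrow> real^'w^'q \<Rightarrow> real^'x^'q \<Rightarrow> real^'q^'q \<Rightarrow>
   'x + ('p + ('w + ('x + 'q))) \<Rightarrow> 'x + ('p + ('w + ('x + 'q))) \<Rightarrow> real" where
  "lower_entry L11 L22 L33 L41 L42 L43 L44 L51 L52 L53 L54 L55 i j =
    (case i of
       Inl a \<Rightarrow> (case j of Inl b \<Rightarrow> L11 $ a $ b | _ \<Rightarrow> 0)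
     | Inr (Inl a) \<Rightarrow> (case j of Inr (Inl b) \<Rightarrow> L22 $ a $ b | _ \<Rightarrow> 0)
     | Inr (Inr (Inl a)) \<Rightarrow> (case j of Inr (Inr (Inl b)) \<Rightarrow> L33 $ a $ b | _ \<Rightarrow> 0)
     | Inr (Inr (Inr (Inl a))) \<Rightarrow>
         (case j of Inl b \<Rightarrow> L41 $ a $ b
                  | Inr (Inl b) \<Rightarrow> L42 $ a $ b
                  | Inr (Inr (Inl b)) \<Rightarrow> L43 $ a $ b
                  | Inr (Inr (Inr (Inl b))) \<Rightarrow> L44 $ a $ b
                  | Inr (Inr (Inr (Inr b))) \<Rightarrow> 0)
     | Inr (Inr (Inr (Inr a))) \<Rightarrow>
         (case j of Inl b \<Rightarrow> L51 $ a $ b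
                  | Inr (Inl b) \<Rightarrow> L52 $ a $ b
                  | Inr (Inr (Inl b)) \<Rightarrow> L53 $ a $ b
                  | Inr (Inr (Inr (Inl b))) \<Rightarrow> L54 $ a $ b
                  | Inr (Inr (Inr (Inr b))) \<Rightarrow> L55 $ a $ b))"

text \<open>The symmetric block matrix: lower triangle as given, the blocks marked
  * are the transposes of the corresponding lower blocks.\<close>
definition sym_block5 ::
  "real^'x^'x \<Rightarrow> real^'p^'p \<Rightarrow> real^'w^'w \<Rightarrow>
   real^'x^'x \<Rightarrow> real^'p^'x \<Rightarrow> real^'w^'x \<Rightarrow> real^'x^'x \<Rightarrow>
   real^'x^'q \<Rightarrow> real^'p^'q \<Rightarrow> real^'w^'q \<Rightarrow> real^'x^'q \<Rightarrow> real^'q^'q \<Rightarrow>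
   real^('x + ('p + ('w + ('x + 'q))))^('x + ('p + ('w + ('x + 'q))))" where
  "sym_block5 L11 L22 L33 L41 L42 L43 L44 L51 L52 L53 L54 L55 =
    (\<chi> i j. if blk j \<le> blk i
            then lower_entry L11 L22 L33 L41 L42 L43 L44 L51 L52 L53 L54 L55 i j
            else lower_entry L11 L22 L33 L41 L42 L43 L44 L51 L52 L53 L54 L55 j i)"

definition lmi_matrix ::
  "real \<Rightarrow> real \<Rightarrow> real \<Rightarrow> real \<Rightarrow> real^'x^'x \<Rightarrow> real^'x^'x \<Rightarrow>
   real^'x^'x \<Rightarrow> real^'u^'x \<Rightarrow> real^'x^'u \<Rightarrow> real^'p^'x \<Rightarrow> real^'w^'x \<Rightarrow>
   real^'x^'q \<Rightarrow> real^'u^'q \<Rightarrow> real^'w^'q \<Rightarrow>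
   real^('x + ('p + ('w + ('x + 'q))))^('x + ('p + ('w + ('x + 'q))))" where
  "lmi_matrix \<alpha> lw nu \<gamma> Qk Qk1 Ak Bk Yk Ek Fk Ck Dk Gk =
    sym_block5
      (\<alpha> *\<^sub>R Qk - lw *\<^sub>R Qk)
      (mat nu) (mat lw)
      (Ak ** Qk + Bk ** Yk) (nu *\<^sub>R Ek) Fk Qk1
      (Ck ** Qk + Dk ** Yk) 0 Gk 0 (mat (nu / \<gamma>\<^sup>2))"

end

theory Submission
  imports Defs
begin

lemma inv_props:
  fixes Q :: "real^'n^'n"
  assumes "sym_pos_def Q"
  shows "Q ** matrix_inv Q = mat 1" "matrix_inv Q ** Q = mat 1" "transpose (matrix_inv Q) = matrix_inv Q"
proof -
  have "\<forall>x. Q *v x = 0 \<longrightarrow> x = 0" using assms unfolding sym_pos_def_def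
    by (metis inner_zero_right less_irrefl)
  then have "invertible Q" using matrix_left_invertible_ker invertible_left_inverse by blast
  then have *: "Q ** matrix_inv Q = mat 1 \<and> matrix_inv Q ** Q = mat 1"
    unfolding invertible_def matrix_inv_def by (rule someI_ex)
  then show "Q ** matrix_inv Q = mat 1" "matrix_inv Q ** Q = mat 1" by auto
  have tQ: "transpose Q = Q" using assms unfolding sym_pos_def_def by auto
  let ?P = "matrix_inv Q"
  have "transpose ?P = transpose ?P ** (Q ** ?P)" using * by simp
  also have "\<dots> = (transpose ?P ** transpose Q) ** ?P" by (simp add: matrix_mul_assoc tQ)
  also have "transpose ?P ** transpose Q = transpose (Q ** ?P)" by (simp add: matrix_transpose_mul)
  also have "\<dots> = mat 1" using * by (simp add: transpose_mat)
  finally show "transpose ?P = ?P" by simp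
qed

lemma inner_transpose:
  fixes A :: "real^'n^'m"
  shows "x \<bullet> (transpose A *v y) = y \<bullet> (A *v x)"
  by (metis dot_lmul_matrix inner_commute transpose_matrix_vector)

lemma sum_Plus_UNIV:
  fixes f :: "('a::finite + 'b::finite) \<Rightarrow> 'c::comm_monoid_add"
  shows "sum f UNIV = sum (\<lambda>a. f (Inl a)) UNIV + sum (\<lambda>b. f (Inr b)) UNIV"
  by (subst UNIV_Plus_UNIV[symmetric], subst sum.Plus) (auto simp: comp_def)

definition blkvec :: "real^'x \<Rightarrow> real^'p \<Rightarrow> real^'w \<Rightarrow> real^'x \<Rightarrow> real^'q \<Rightarrow>
   real^('x + ('p + ('w + ('x + 'q))))" where
  "blkvec z1 z2 z3 z4 z5 = (\<chi> i. case i of Inl a \<Rightarrow> z1$a | Inr (Inl a) \<Rightarrow> z2$a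
     | Inr (Inr (Inl a)) \<Rightarrow> z3$a | Inr (Inr (Inr (Inl a))) \<Rightarrow> z4$a | Inr (Inr (Inr (Inr a))) \<Rightarrow> z5$a)"

lemma quad_form:
  fixes z1 :: "real^'x::finite" and z2 :: "real^'p::finite" and z3 :: "real^'w::finite"
    and z4 :: "real^'x" and z5 :: "real^'q::finite"
  shows "blkvec z1 z2 z3 z4 z5 \<bullet> (sym_block5 L11 L22 L33 L41 L42 L43 L44 L51 L52 L53 L54 L55 *v blkvec z1 z2 z3 z4 z5)
   = z1 \<bullet> (L11 *v z1) + z2 \<bullet> (L22 *v z2) + z3 \<bullet> (L33 *v z3) + z4 \<bullet> (L44 *v z4) + z5 \<bullet> (L55 *v z5)
     + 2 * (z4 \<bullet> (L41 *v z1)) + 2 * (z4 \<bullet> (L42 *v z2)) + 2 * (z4 \<bullet> (L43 *v z3))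
     + 2 * (z5 \<bullet> (L51 *v z1)) + 2 * (z5 \<bullet> (L52 *v z2)) + 2 * (z5 \<bullet> (L53 *v z3)) + 2 * (z5 \<bullet> (L54 *v z4))"
  (is "?z \<bullet> (?M *v ?z) = _")
proof -
  have r1: "(?M *v ?z) $ Inl a = (L11 *v z1 + transpose L41 *v z4 + transpose L51 *v z5) $ a" for a
    by (simp add: matrix_vector_mult_def sum_Plus_UNIV sym_block5_def blk_def lower_entry_def blkvec_def transpose_def)
  have r2: "(?M *v ?z) $ Inr (Inl a) = (L22 *v z2 + transpose L42 *v z4 + transpose L52 *v z5) $ a" for a
    by (simp add: matrix_vector_mult_def sum_Plus_UNIV sym_block5_def blk_def lower_entry_def blkvec_def transpose_def)
  have r3: "(?M *v ?z) $ Inr (Inr (Inl a)) = (L33 *v z3 + transpose L43 *v z4 + transpose L53 *v z5) $ a" for a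
    by (simp add: matrix_vector_mult_def sum_Plus_UNIV sym_block5_def blk_def lower_entry_def blkvec_def transpose_def)
  have r4: "(?M *v ?z) $ Inr (Inr (Inr (Inl a))) = (L41 *v z1 + L42 *v z2 + L43 *v z3 + L44 *v z4 + transpose L54 *v z5) $ a" for a
    by (simp add: matrix_vector_mult_def sum_Plus_UNIV sym_block5_def blk_def lower_entry_def blkvec_def transpose_def)
  have r5: "(?M *v ?z) $ Inr (Inr (Inr (Inr a))) = (L51 *v z1 + L52 *v z2 + L53 *v z3 + L54 *v z4 + L55 *v z5) $ a" for a
    by (simp add: matrix_vector_mult_def sum_Plus_UNIV sym_block5_def blk_def lower_entry_def blkvec_def transpose_def)
  have "?z \<bullet> (?M *v ?z) = z1 \<bullet> (L11 *v z1 + transpose L41 *v z4 + transpose L51 *v z5)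
     + z2 \<bullet> (L22 *v z2 + transpose L42 *v z4 + transpose L52 *v z5)
     + z3 \<bullet> (L33 *v z3 + transpose L43 *v z4 + transpose L53 *v z5)
     + z4 \<bullet> (L41 *v z1 + L42 *v z2 + L43 *v z3 + L44 *v z4 + transpose L54 *v z5)
     + z5 \<bullet> (L51 *v z1 + L52 *v z2 + L53 *v z3 + L54 *v z4 + L55 *v z5)"
    apply (subst inner_vec_def)
    apply (simp only: sum_Plus_UNIV r1 r2 r3 r4 r5)
    apply (simp add: inner_vec_def blkvec_def add.assoc)
    done
  then show ?thesis by (simp only: inner_add_right inner_transpose)
qed

lemma scaleR_mv: "((c::real) *\<^sub>R (A::real^'n^'m)) *v x = c *\<^sub>R (A *v x)"
  by (simp add: vec_eq_iff matrix_vector_mult_def sum_distrib_left mult.assoc)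

lemma mat_mv: "mat (c::real) *v (x::real^'n) = c *\<^sub>R x"
  apply (vector matrix_vector_mult_def mat_def)
  apply (simp add: if_distrib if_distribR cong del: if_weak_cong)
  done

lemma mm_add_rdistrib: "((A::real^'n^'m) + B) ** C = A ** C + B ** C"
  by (simp add: matrix_matrix_mult_def vec_eq_iff sum.distrib[symmetric] distrib_right)

lemma arith_fin:
  fixes a1 a2 a3 a4 a5 b1 b2 b3 c1 c2 c3 c4 V W d ww x y al lw :: real
  assumes "0 \<le> a1 + a2 + a3 + a4 + a5 + 2 * b1 + 2 * b2 + 2 * b3 + 2 * c1 + 2 * c2 + 2 * c3 + 2 * c4"
    "c2 = 0" "c4 = 0" "a1 = (al - lw) * V" "a2 = d" "a3 = lw * ww" "a4 = W" "a5 = x"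
    "b1 + b2 + b3 = - W" "c1 + c3 = - y"
  shows "W \<le> (al - lw) * V + d + lw * ww + x - 2 * y"
proof -
  have "a1 + a2 + a3 + a4 + a5 + 2 * b1 + 2 * b2 + 2 * b3 + 2 * c1 + 2 * c2 + 2 * c3 + 2 * c4
     = a1 + a2 + a3 + a4 + a5 + 2 * (b1 + b2 + b3) + 2 * (c1 + c3) + 2 * c2 + 2 * c4"
    by (simp add: algebra_simps)
  also have "\<dots> = (al - lw) * V + d + lw * ww + W + x + 2 * (- W) + 2 * (- y)"
    using assms(2-10) by simp
  finally show ?thesis using assms(1) by simp
qed

lemma main_step:
  fixes \<alpha> lw nu g :: real and Qk Qk1 :: "real^'x::finite^'x" and Ak :: "real^'x^'x"
    and Bk :: "real^'u::finite^'x" and Yk :: "real^'x^'u" and Ek :: "real^'p::finite^'x"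
    and Fk :: "real^'w::finite^'x" and Ck :: "real^'x^'q::finite" and Dk :: "real^'u^'q"
    and Gk :: "real^'w^'q" and \<eta> :: "real^'x" and dp :: "real^'p" and w :: "real^'w"
  assumes Qp: "sym_pos_def Qk" and Q1p: "sym_pos_def Qk1"
    and g: "0 < g" and nu: "0 < nu" and lw: "0 < lw"
    and L: "psd (lmi_matrix \<alpha> lw nu g Qk Qk1 Ak Bk Yk Ek Fk Ck Dk Gk)"
    and h1: "norm dp \<le> g * norm ((Ck + Dk ** (Yk ** matrix_inv Qk)) *v \<eta> + Gk *v w)"
    and h2: "\<eta> \<bullet> (matrix_inv Qk *v \<eta>) \<ge> (norm w)\<^sup>2"
  shows "((Ak + Bk ** (Yk ** matrix_inv Qk)) *v \<eta> + Fk *v w + Ek *v dp) \<bullet>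
          (matrix_inv Qk1 *v ((Ak + Bk ** (Yk ** matrix_inv Qk)) *v \<eta> + Fk *v w + Ek *v dp))
         \<le> \<alpha> * (\<eta> \<bullet> (matrix_inv Qk *v \<eta>))"
proof -
  define P where "P = matrix_inv Qk"
  define P1 where "P1 = matrix_inv Qk1"
  define e' where "e' = (Ak + Bk ** (Yk ** P)) *v \<eta> + Fk *v w + Ek *v dp"
  define q where "q = (Ck + Dk ** (Yk ** P)) *v \<eta> + Gk *v w"
  define V where "V = \<eta> \<bullet> (P *v \<eta>)"
  define W where "W = e' \<bullet> (P1 *v e')"
  note ip = inv_props[OF Qp, folded P_def]
  note ip1 = inv_props[OF Q1p, folded P1_def]
  define z1 where "z1 = P *v \<eta>"
  define z2 where "z2 = (1/nu) *\<^sub>R dp"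
  define z4 where "z4 = (-1::real) *\<^sub>R (P1 *v e')"
  define z5 where "z5 = (- (g\<^sup>2/nu)) *\<^sub>R q"
  have Qz1: "Qk *v z1 = \<eta>" unfolding z1_def by (simp add: matrix_vector_mul_assoc ip)
  have symP: "x \<bullet> (P *v y) = y \<bullet> (P *v x)" for x y
    using inner_transpose[of x P y] ip(3) by simp
  have symP1: "x \<bullet> (P1 *v y) = y \<bullet> (P1 *v x)" for x y
    using inner_transpose[of x P1 y] ip1(3) by simp
  have t1a: "(\<alpha> *\<^sub>R Qk - lw *\<^sub>R Qk) *v z1 = (\<alpha> - lw) *\<^sub>R \<eta>"
    by (simp add: matrix_vector_mult_diff_rdistrib scaleR_mv Qz1 scaleR_diff_left)
  have z1e: "z1 \<bullet> \<eta> = V" unfolding V_def z1_def by (rule inner_commute)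
  have t1: "z1 \<bullet> ((\<alpha> *\<^sub>R Qk - lw *\<^sub>R Qk) *v z1) = (\<alpha> - lw) * V"
    unfolding t1a inner_scaleR_right z1e ..
  have t2: "z2 \<bullet> (mat nu *v z2) = (norm dp)\<^sup>2 / nu"
    using nu by (simp add: mat_mv z2_def power2_norm_eq_inner[symmetric] power2_eq_square)
  have t3: "w \<bullet> (mat lw *v w) = lw * (norm w)\<^sup>2"
    by (simp add: mat_mv power2_norm_eq_inner)
  have Q1z4: "Qk1 *v z4 = (-1::real) *\<^sub>R e'"
    unfolding z4_def matrix_vector_mult_scaleR matrix_vector_mul_assoc ip1 by simp
  have t4: "z4 \<bullet> (Qk1 *v z4) = W"
    by (simp only: Q1z4) (simp add: z4_def W_def inner_commute)
  have t5: "z5 \<bullet> (mat (nu / g\<^sup>2) *v z5) = g\<^sup>2 / nu * (norm q)\<^sup>2"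
    using nu g by (simp add: mat_mv z5_def power2_norm_eq_inner[symmetric] power2_eq_square field_simps)
  have APm: "(Ak ** Qk + Bk ** Yk) ** P = Ak + Bk ** (Yk ** P)"
    by (simp add: mm_add_rdistrib matrix_mul_assoc[symmetric] ip)
  have CPm: "(Ck ** Qk + Dk ** Yk) ** P = Ck + Dk ** (Yk ** P)"
    by (simp add: mm_add_rdistrib matrix_mul_assoc[symmetric] ip)
  have AP: "(Ak ** Qk + Bk ** Yk) *v z1 = (Ak + Bk ** (Yk ** P)) *v \<eta>"
    unfolding z1_def matrix_vector_mul_assoc APm ..
  have CP: "(Ck ** Qk + Dk ** Yk) *v z1 = (Ck + Dk ** (Yk ** P)) *v \<eta>"
    unfolding z1_def matrix_vector_mul_assoc CPm ..
  have EP: "(nu *\<^sub>R Ek) *v z2 = Ek *v dp"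
    using nu by (simp add: z2_def scaleR_mv matrix_vector_mult_scaleR)
  have c4: "z4 \<bullet> ((Ak ** Qk + Bk ** Yk) *v z1) + z4 \<bullet> ((nu *\<^sub>R Ek) *v z2) + z4 \<bullet> (Fk *v w) = - W"
  proof -
    have "z4 \<bullet> ((Ak ** Qk + Bk ** Yk) *v z1) + z4 \<bullet> ((nu *\<^sub>R Ek) *v z2) + z4 \<bullet> (Fk *v w) = z4 \<bullet> e'"
      unfolding AP EP e'_def P_def by (simp only: inner_add_right add.assoc)
    also have "\<dots> = - W" unfolding z4_def W_def by (simp add: inner_commute)
    finally show ?thesis .
  qed
  have c5: "z5 \<bullet> ((Ck ** Qk + Dk ** Yk) *v z1) + z5 \<bullet> (Gk *v w) = - (g\<^sup>2/nu * (norm q)\<^sup>2)"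
  proof -
    have "z5 \<bullet> ((Ck ** Qk + Dk ** Yk) *v z1) + z5 \<bullet> (Gk *v w) = z5 \<bullet> q"
      unfolding CP q_def P_def by (simp only: inner_add_right)
    also have "\<dots> = - (g\<^sup>2/nu * (norm q)\<^sup>2)" unfolding z5_def by (simp add: power2_norm_eq_inner)
    finally show ?thesis .
  qed
  have "0 \<le> blkvec z1 z2 w z4 z5 \<bullet> (lmi_matrix \<alpha> lw nu g Qk Qk1 Ak Bk Yk Ek Fk Ck Dk Gk *v blkvec z1 z2 w z4 z5)"
    using L unfolding psd_def by blast
  also have "\<dots> = z1 \<bullet> ((\<alpha> *\<^sub>R Qk - lw *\<^sub>R Qk) *v z1) + z2 \<bullet> (mat nu *v z2) + w \<bullet> (mat lw *v w)
       + z4 \<bullet> (Qk1 *v z4) + z5 \<bullet> (mat (nu / g\<^sup>2) *v z5)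
     + 2 * (z4 \<bullet> ((Ak ** Qk + Bk ** Yk) *v z1)) + 2 * (z4 \<bullet> ((nu *\<^sub>R Ek) *v z2)) + 2 * (z4 \<bullet> (Fk *v w))
     + 2 * (z5 \<bullet> ((Ck ** Qk + Dk ** Yk) *v z1)) + 2 * (z5 \<bullet> (0 *v z2)) + 2 * (z5 \<bullet> (Gk *v w)) + 2 * (z5 \<bullet> (0 *v z4))"
    unfolding lmi_matrix_def by (rule quad_form)
  finally have ineq00: "0 \<le> z1 \<bullet> ((\<alpha> *\<^sub>R Qk - lw *\<^sub>R Qk) *v z1) + z2 \<bullet> (mat nu *v z2) + w \<bullet> (mat lw *v w)
       + z4 \<bullet> (Qk1 *v z4) + z5 \<bullet> (mat (nu / g\<^sup>2) *v z5)
     + 2 * (z4 \<bullet> ((Ak ** Qk + Bk ** Yk) *v z1)) + 2 * (z4 \<bullet> ((nu *\<^sub>R Ek) *v z2)) + 2 * (z4 \<bullet> (Fk *v w))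
     + 2 * (z5 \<bullet> ((Ck ** Qk + Dk ** Yk) *v z1)) + 2 * (z5 \<bullet> (0 *v z2)) + 2 * (z5 \<bullet> (Gk *v w)) + 2 * (z5 \<bullet> (0 *v z4))" .
  have zz: "z5 \<bullet> (0 *v z2) = 0" "z5 \<bullet> (0 *v z4) = 0" by simp_all
  have ineq1: "W \<le> (\<alpha> - lw) * V + (norm dp)\<^sup>2 / nu + lw * (norm w)\<^sup>2 + g\<^sup>2 / nu * (norm q)\<^sup>2
       - 2 * (g\<^sup>2/nu * (norm q)\<^sup>2)"
    by (rule arith_fin[OF ineq00 zz t1 t2 t3 t4 t5 c4 c5])
  have ineq: "W \<le> (\<alpha> - lw) * V + (norm dp)\<^sup>2 / nu + lw * (norm w)\<^sup>2 - g\<^sup>2 / nu * (norm q)\<^sup>2"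
    using ineq1 by simp
  have "(norm dp)\<^sup>2 \<le> (g * norm q)\<^sup>2"
    by (rule power_mono) (use h1 in \<open>simp_all add: q_def P_def\<close>)
  then have dq: "(norm dp)\<^sup>2 \<le> g\<^sup>2 * (norm q)\<^sup>2" by (simp add: power_mult_distrib)
  have "(norm dp)\<^sup>2 / nu - g\<^sup>2 / nu * (norm q)\<^sup>2 = ((norm dp)\<^sup>2 - g\<^sup>2 * (norm q)\<^sup>2) / nu"
    by (simp add: diff_divide_distrib)
  also have "\<dots> \<le> 0" using dq nu by (simp add: divide_nonpos_pos)
  finally have d0: "(norm dp)\<^sup>2 / nu - g\<^sup>2 / nu * (norm q)\<^sup>2 \<le> 0" .
  have "lw * (norm w)\<^sup>2 \<le> lw * V"
    using h2 lw unfolding V_def P_def by simp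
  then have "W \<le> \<alpha> * V" using ineq d0 by (simp add: algebra_simps)
  then show ?thesis unfolding W_def V_def e'_def P_def P1_def .
qed
theorem theorem1:
  fixes N :: nat and \<alpha> :: real
    and A :: "nat \<Rightarrow> real^'x^'x" and B :: "nat \<Rightarrow> real^'u^'x"
    and F :: "nat \<Rightarrow> real^'w^'x" and E :: "nat \<Rightarrow> real^'p^'x"
    and C :: "nat \<Rightarrow> real^'x^'q" and D :: "nat \<Rightarrow> real^'u^'q"
    and G :: "nat \<Rightarrow> real^'w^'q" and \<gamma> :: "nat \<Rightarrow> real"
    and Q :: "nat \<Rightarrow> real^'x^'x" and Y :: "nat \<Rightarrow> real^'x^'u"
    and nup :: "nat \<Rightarrow> real" and lamw :: "nat \<Rightarrow> real"
  assumes alpha: "0 < \<alpha>" "\<alpha> \<le> 1"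
    and gamma: "\<And>k. k < N \<Longrightarrow> 0 < \<gamma> k"
    and Qpd: "\<And>k. k \<le> N \<Longrightarrow> sym_pos_def (Q k)"
    and nu: "\<And>k. k < N \<Longrightarrow> 0 < nup k"
    and lam: "\<And>k. k < N \<Longrightarrow> 0 < lamw k"
    and LMI: "\<And>k. k < N \<Longrightarrow>
      psd (lmi_matrix \<alpha> (lamw k) (nup k) (\<gamma> k) (Q k) (Q (Suc k))
             (A k) (B k) (Y k) (E k) (F k) (C k) (D k) (G k))"
  shows "\<forall>k < N. \<forall>(\<eta>::real^'x) (\<delta>p::real^'p) (w::real^'w).
      (let K = Y k ** matrix_inv (Q k);
           Acl = A k + B k ** K;
           Ccl = C k + D k ** K;
           \<eta>' = Acl *v \<eta> + F k *v w + E k *v \<delta>p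
       in norm \<delta>p \<le> \<gamma> k * norm (Ccl *v \<eta> + G k *v w)
          \<and> \<eta> \<bullet> (matrix_inv (Q k) *v \<eta>) \<ge> (norm w)\<^sup>2
          \<longrightarrow> \<eta>' \<bullet> (matrix_inv (Q (Suc k)) *v \<eta>') \<le> \<alpha> * (\<eta> \<bullet> (matrix_inv (Q k) *v \<eta>)))"
proof (intro allI impI)
  fix k \<eta> \<delta>p w
  assume k: "k < N"
  show "let K = Y k ** matrix_inv (Q k);
           Acl = A k + B k ** K;
           Ccl = C k + D k ** K;
           \<eta>' = Acl *v \<eta> + F k *v w + E k *v \<delta>p
       in norm \<delta>p \<le> \<gamma> k * norm (Ccl *v \<eta> + G k *v w)
          \<and> \<eta> \<bullet> (matrix_inv (Q k) *v \<eta>) \<ge> (norm w)\<^sup>2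
          \<longrightarrow> \<eta>' \<bullet> (matrix_inv (Q (Suc k)) *v \<eta>') \<le> \<alpha> * (\<eta> \<bullet> (matrix_inv (Q k) *v \<eta>))"
    unfolding Let_def
    using main_step[OF Qpd[of k] Qpd[of "Suc k"] gamma[OF k] nu[OF k] lam[OF k] LMI[OF k]] k by auto
qed

end
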